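(* Let $\lambda>0$ and let $q_1,\dots,q_n>0$. For a permutation $\pi$ of $\{1,\dots,n\}$ consider the power profile $p_\ell=q_{\pi(\ell)}$ and $$\gamma(\pi)=\min_{\ell=1,\dots,n}\frac{p_\ell}{1+\lambda\sum_{j=\ell+1}^np_j}.$$ Then $\gamma(\pi)$ is maximized over all permutations $\pi$ by any $\pi$ for which $p_1\ge p_2\ge\dots\ge p_n$. *)

theory Defs
  imports Complex_Main "HOL-Combinatorics.Permutations"
begin

definition gamma :: "real \<Rightarrow> nat \<Rightarrow> (nat \<Rightarrow> real) \<Rightarrow> (nat \<Rightarrow> nat) \<Rightarrow> real" where
  "gamma lam n q \<pi> = (MIN l\<in>{1..n}. q (\<pi> l) / (1 + lam * (\<Sum>j=l+1..n. q (\<pi> j))))"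

end

theory Submission
  imports Defs
begin

theorem mainTheorem5:
  fixes lam :: real and n :: nat and q :: "nat \<Rightarrow> real" and \<pi> :: "nat \<Rightarrow> nat"
  assumes "lam > 0"
    and "n \<ge> 1"
    and "\<And>i. i \<in> {1..n} \<Longrightarrow> q i > 0"
    and "\<pi> permutes {1..n}"
    and "\<And>l. l \<in> {1..<n} \<Longrightarrow> q (\<pi> l) \<ge> q (\<pi> (l+1))"
  shows "\<forall>\<sigma>. \<sigma> permutes {1..n} \<longrightarrow> gamma lam n q \<sigma> \<le> gamma lam n q \<pi>"
proof (intro allI impI)
  fix \<sigma> assume sp: "\<sigma> permutes {1..n}"
  have srt: "q (\<pi> j) \<le> q (\<pi> l)" if "1 \<le> l" "l \<le> j" "j \<le> n" for l j
    using that(2,3)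
  proof (induction j rule: dec_induct)
    case base then show ?case by simp
  next
    case (step m)
    have "q (\<pi> (m+1)) \<le> q (\<pi> m)" using assms(5)[of m] step that(1) by auto
    then show ?case using step by simp
  qed
  have pimg: "\<pi> ` {1..n} = {1..n}" "\<sigma> ` {1..n} = {1..n}"
    using permutes_image[OF assms(4)] permutes_image[OF sp] by simp_all
  have pinj: "inj \<pi>" "inj \<sigma>" using permutes_inj[OF assms(4)] permutes_inj[OF sp] by simp_all
  have qpos: "q (f j) > 0" if "f permutes {1..n}" "j \<in> {1..n}" for f j
    using assms(3) that(2) permutes_in_image[OF that(1)] by simp
  show "gamma lam n q \<sigma> \<le> gamma lam n q \<pi>"
    unfolding gamma_def
  proof (rule Min.boundedI)
    show "finite ((\<lambda>l. q (\<pi> l) / (1 + lam * (\<Sum>j = l + 1..n. q (\<pi> j)))) ` {1..n})" by simp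
    show "(\<lambda>l. q (\<pi> l) / (1 + lam * (\<Sum>j = l + 1..n. q (\<pi> j)))) ` {1..n} \<noteq> {}"
      using assms(2) by simp
  next
    fix a assume "a \<in> (\<lambda>l. q (\<pi> l) / (1 + lam * (\<Sum>j = l + 1..n. q (\<pi> j)))) ` {1..n}"
    then obtain l where l: "l \<in> {1..n}" and a: "a = q (\<pi> l) / (1 + lam * (\<Sum>j = l + 1..n. q (\<pi> j)))"
      by blast
    define A where "A = \<pi> ` {l..n}"
    define K where "K = {k\<in>{1..n}. \<sigma> k \<in> A}"
    have A1: "A \<subseteq> {1..n}" using l pimg unfolding A_def by auto
    have "\<pi> l \<in> A" using l unfolding A_def by auto
    then obtain k0 where "k0 \<in> {1..n}" "\<sigma> k0 = \<pi> l" using pimg A1 by (metis (no_types, lifting) imageE subsetD)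
    then have Kne: "K \<noteq> {}" using \<open>\<pi> l \<in> A\<close> unfolding K_def by auto
    have Kfin: "finite K" unfolding K_def by simp
    define l' where "l' = Min K"
    have l'K: "l' \<in> K" using Kne Kfin l'_def Min_in by blast
    have Kge: "k \<ge> l'" if "k \<in> K" for k using that Kfin l'_def by simp
    have imgK: "\<sigma> ` K = A"
    proof
      show "\<sigma> ` K \<subseteq> A" unfolding K_def by auto
      show "A \<subseteq> \<sigma> ` K"
      proof
        fix x assume "x \<in> A"
        then have "x \<in> \<sigma> ` {1..n}" using A1 pimg by auto
        then obtain k where "k \<in> {1..n}" "x = \<sigma> k" by blast
        then show "x \<in> \<sigma> ` K" using \<open>x \<in> A\<close> unfolding K_def by auto
      qed
    qed
    have sumK: "(\<Sum>k\<in>K. q (\<sigma> k)) = (\<Sum>x\<in>A. q x)"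
      using sum.reindex[of \<sigma> K q] imgK pinj(2) by (simp add: inj_on_subset)
    have sumA: "(\<Sum>x\<in>A. q x) = (\<Sum>j=l..n. q (\<pi> j))"
      unfolding A_def using sum.reindex[of \<pi> "{l..n}" q] pinj(1) by (simp add: inj_on_subset)
    have sumA2: "(\<Sum>j=l..n. q (\<pi> j)) = q (\<pi> l) + (\<Sum>j=l+1..n. q (\<pi> j))"
      using l by (simp add: sum.atLeast_Suc_atMost)
    have sl'A: "\<sigma> l' \<in> A" using l'K unfolding K_def by auto
    then obtain j where j: "j \<in> {l..n}" "\<sigma> l' = \<pi> j" unfolding A_def by blast
    have num: "q (\<sigma> l') \<le> q (\<pi> l)" using j srt l by auto
    have l'r: "l' \<in> {1..n}" using l'K unfolding K_def by auto
    have "(\<Sum>k\<in>K - {l'}. q (\<sigma> k)) \<le> (\<Sum>k=l'+1..n. q (\<sigma> k))"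
    proof (rule sum_mono2)
      show "finite {l'+1..n}" by simp
      show "K - {l'} \<subseteq> {l'+1..n}" using Kge unfolding K_def by force
      fix b assume "b \<in> {l'+1..n} - (K - {l'})"
      then have "b \<in> {1..n}" using l'r by auto
      then show "0 \<le> q (\<sigma> b)" using qpos[OF sp] less_imp_le by blast
    qed
    moreover have "(\<Sum>k\<in>K - {l'}. q (\<sigma> k)) = (\<Sum>k\<in>K. q (\<sigma> k)) - q (\<sigma> l')"
      using Kfin l'K by (simp add: sum_diff1)
    ultimately have den: "(\<Sum>j=l+1..n. q (\<pi> j)) \<le> (\<Sum>k=l'+1..n. q (\<sigma> k))"
      using sumK sumA sumA2 num by linarith
    have T0: "0 \<le> (\<Sum>j=l+1..n. q (\<pi> j))"
      by (rule sum_nonneg) (use qpos[OF assms(4)] l in \<open>auto intro: less_imp_le\<close>)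
    have p0: "0 < q (\<sigma> l')" using qpos[OF sp l'r] .
    have ratio: "q (\<sigma> l') / (1 + lam * (\<Sum>k=l'+1..n. q (\<sigma> k)))
        \<le> q (\<pi> l) / (1 + lam * (\<Sum>j=l+1..n. q (\<pi> j)))"
    proof (rule frac_le)
      show "0 \<le> q (\<pi> l)" using p0 num by linarith
      show "q (\<sigma> l') \<le> q (\<pi> l)" by (rule num)
      show "0 < 1 + lam * (\<Sum>j=l+1..n. q (\<pi> j))" using T0 assms(1)
        by (smt (verit) mult_nonneg_nonneg)
      show "1 + lam * (\<Sum>j=l+1..n. q (\<pi> j)) \<le> 1 + lam * (\<Sum>k=l'+1..n. q (\<sigma> k))"
        using den assms(1) by (simp add: mult_left_mono)
    qed
    have "(MIN l\<in>{1..n}. q (\<sigma> l) / (1 + lam * (\<Sum>j=l+1..n. q (\<sigma> j))))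
        \<le> q (\<sigma> l') / (1 + lam * (\<Sum>k=l'+1..n. q (\<sigma> k)))"
      using l'r by (intro Min_le) auto
    then show "(MIN l\<in>{1..n}. q (\<sigma> l) / (1 + lam * (\<Sum>j=l+1..n. q (\<sigma> j)))) \<le> a"
      using ratio a by linarith
  qed
qed

end
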